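(* For every training set $S=\{(x_i,y_i)\}_{i=1}^n$, every $1\le k\le n$ and every classifier $f_\theta$, $$L_{0-1}(\{(y_i,f_\theta(x_i))\}_{i=1}^n)-k<\frac{1}{M}L_{\textrm{close-}k}(\{\ell(y_i,f_\theta(x_i))\}_{i=1}^n)<L_{0-1}(\{(y_i,f_\theta(x_i))\}_{i=1}^n)+k,$$ where $L_{0-1}$ is the number of misclassified training examples.
   Context: Binary classification with labels $y\in\{-1,+1\}$ and real-valued predictions. An individual loss $\ell(y,f(x))\ge 0$ comes with a threshold $T$ such that an example is correctly classified iff its individual loss is below $T$. Given individual losses $\ell_1,\dots,\ell_n$, let $\ell_{[i]}$ be the individual loss with the $i$-th smallest value of $|\ell_j-T|$. For a constant $M$ at least as large as every individual loss that occurs, the close-$k$ aggregate loss is $L_{\textrm{close-}k}(\{\ell_i\})=\sum_{i=1}^n c_i$ with $c_i=\ell_{[i]}$ if $i\le k$, $c_i=0$ if $i>k$ and $\ell_{[i]}$ is correctly classified, and $c_i=M$ if $i>k$ and $\ell_{[i]}$ is incorrectly classified. *)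

theory Defs
  imports Main "HOL.Real"
begin

text \<open>An example with label y and real prediction p is correctly classified iff
  sign p = y, i.e. y * p > 0 (for y in {-1,+1}).\<close>
definition correctly_classified :: "real \<Rightarrow> real \<Rightarrow> bool" where
  "correctly_classified yy p \<longleftrightarrow> yy * p > 0"

definition L01 :: "nat \<Rightarrow> (nat \<Rightarrow> real) \<Rightarrow> (nat \<Rightarrow> real) \<Rightarrow> nat" where
  "L01 n y p = card {i \<in> {..<n}. \<not> correctly_classified (y i) (p i)}"

text \<open>sigma orders the individual losses l 0, ..., l (n-1) by increasing |l j - T|,
  so l (sigma i) is the loss with the (i+1)-th smallest distance to T (ties arbitrary).\<close>
definition close_order :: "real \<Rightarrow> nat \<Rightarrow> (nat \<Rightarrow> real) \<Rightarrow> (nat \<Rightarrow> nat) \<Rightarrow> bool" where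
  "close_order T n l \<sigma> \<longleftrightarrow> bij_betw \<sigma> {..<n} {..<n} \<and>
     (\<forall>i j. i \<le> j \<longrightarrow> j < n \<longrightarrow> \<bar>l (\<sigma> i) - T\<bar> \<le> \<bar>l (\<sigma> j) - T\<bar>)"

text \<open>close-k aggregate loss (0-indexed positions: position i < k means i+1 \<le> k).
  An individual loss is correctly classified iff it is below T.\<close>
definition close_k_loss :: "real \<Rightarrow> real \<Rightarrow> nat \<Rightarrow> nat \<Rightarrow> (nat \<Rightarrow> real) \<Rightarrow> (nat \<Rightarrow> nat) \<Rightarrow> real" where
  "close_k_loss T M k n l \<sigma> =
     (\<Sum>i<n. if i < k then l (\<sigma> i) else if l (\<sigma> i) < T then 0 else M)"

end

theory Submission
  imports Defs
begin

theorem lemma3: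
  fixes loss :: "real \<Rightarrow> real \<Rightarrow> real"
    and T M :: real
    and n k :: nat
    and x :: "nat \<Rightarrow> 'a"
    and y :: "nat \<Rightarrow> real"
    and f :: "'a \<Rightarrow> real"
    and \<sigma> :: "nat \<Rightarrow> nat"
  assumes loss_nonneg: "\<forall>yy\<in>{-1, 1}. \<forall>p. loss yy p \<ge> 0"
    and threshold: "\<forall>yy\<in>{-1, 1}. \<forall>p. correctly_classified yy p \<longleftrightarrow> loss yy p < T"
    and M_bound: "\<forall>yy\<in>{-1, 1}. \<forall>p. loss yy p \<le> M"
    and labels: "\<forall>i<n. y i \<in> {-1, 1}"
    and k_pos: "1 \<le> k" and k_le: "k \<le> n"
    and order: "close_order T n (\<lambda>i. loss (y i) (f (x i))) \<sigma>"
  shows "real (L01 n y (\<lambda>i. f (x i))) - real k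
           < close_k_loss T M k n (\<lambda>i. loss (y i) (f (x i))) \<sigma> / M
       \<and> close_k_loss T M k n (\<lambda>i. loss (y i) (f (x i))) \<sigma> / M
           < real (L01 n y (\<lambda>i. f (x i))) + real k"
proof -
  define l where "l = (\<lambda>i. loss (y i) (f (x i)))"
  define b where "b = (\<lambda>j. if l j < T then 0 else (1::real))"
  have T0: "T > 0"
  proof -
    have "correctly_classified 1 1" by (simp add: correctly_classified_def)
    then have "loss 1 1 < T" using threshold by auto
    moreover have "loss 1 1 \<ge> 0" using loss_nonneg by auto
    ultimately show ?thesis by linarith
  qed
  have MT: "M \<ge> T"
  proof -
    have "\<not> correctly_classified 1 (-1)" by (simp add: correctly_classified_def)
    then have "loss 1 (-1) \<ge> T" using threshold by auto
    moreover have "loss 1 (-1) \<le> M" using M_bound by auto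
    ultimately show ?thesis by linarith
  qed
  have M0: "M > 0" using T0 MT by linarith
  have lj: "0 \<le> l j \<and> l j \<le> M \<and> (correctly_classified (y j) (f (x j)) \<longleftrightarrow> l j < T)"
    if "j < n" for j
    using that labels loss_nonneg M_bound threshold unfolding l_def by blast
  have bij: "bij_betw \<sigma> {..<n} {..<n}" using order unfolding close_order_def by blast
  have sig: "\<sigma> i < n" if "i < n" for i using bij that by (auto dest: bij_betw_apply)
  have "real (L01 n y (\<lambda>i. f (x i))) = (\<Sum>j<n. b j)"
  proof -
    have "{i \<in> {..<n}. \<not> correctly_classified (y i) (f (x i))} = {j \<in> {..<n}. \<not> l j < T}"
      using lj by auto
    then have "real (L01 n y (\<lambda>i. f (x i))) = real (card {j \<in> {..<n}. \<not> l j < T})"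
      unfolding L01_def by simp
    also have "\<dots> = (\<Sum>j<n. b j)"
    proof -
      have e: "{..<n} \<inter> - {j. l j < T} = {j \<in> {..<n}. \<not> l j < T}" by auto
      show ?thesis unfolding b_def by (simp only: sum.If_cases finite_lessThan e) simp
    qed
    finally show ?thesis .
  qed
  also have "(\<Sum>j<n. b j) = (\<Sum>i<n. b (\<sigma> i))"
    using sum.reindex_bij_betw[OF bij, of b] by simp
  finally have L: "real (L01 n y (\<lambda>i. f (x i))) = (\<Sum>i<n. b (\<sigma> i))" .
  define c where "c = (\<lambda>i. if i < k then l (\<sigma> i) else if l (\<sigma> i) < T then 0 else M)"
  have S: "close_k_loss T M k n l \<sigma> / M = (\<Sum>i<n. c i / M)"
    unfolding close_k_loss_def c_def by (simp add: sum_divide_distrib)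
  define d where "d = (\<lambda>i. c i / M - b (\<sigma> i))"
  have diff: "close_k_loss T M k n l \<sigma> / M - real (L01 n y (\<lambda>i. f (x i))) = (\<Sum>i<n. d i)"
    unfolding S L d_def by (simp add: sum_subtractf)
  have d0: "d i = 0" if "k \<le> i" for i
    using that M0 unfolding d_def c_def b_def by auto
  have "(\<Sum>i<n. d i) = (\<Sum>i<k. d i)"
  proof (rule sum.mono_neutral_right)
    show "{..<k} \<subseteq> {..<n}" using k_le by auto
  qed (auto intro: d0)
  moreover have dbound: "\<bar>d i\<bar> < 1" if "i < k" for i
  proof -
    have "\<sigma> i < n" using sig that k_le by simp
    then have h: "0 \<le> l (\<sigma> i)" "l (\<sigma> i) \<le> M" using lj by auto
    have "c i / M = l (\<sigma> i) / M" using that unfolding c_def by simp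
    moreover have "0 \<le> l (\<sigma> i) / M" using h M0 by simp
    moreover have "l (\<sigma> i) / M \<le> 1" using h M0 by simp
    moreover have "l (\<sigma> i) < T \<Longrightarrow> l (\<sigma> i) / M < 1" using h M0 MT by simp
    moreover have "\<not> l (\<sigma> i) < T \<Longrightarrow> 0 < l (\<sigma> i) / M" using h M0 T0 by simp
    ultimately show ?thesis unfolding d_def b_def by auto
  qed
  have kne: "{..<k} \<noteq> {}" using k_pos by (metis lessThan_iff empty_iff less_le_trans zero_less_one)
  have "(\<Sum>i<k. d i) < (\<Sum>i<k. (1::real))"
    by (rule sum_strict_mono) (use kne dbound in \<open>auto simp: abs_less_iff\<close>)
  moreover have "(\<Sum>i<k. - (1::real)) < (\<Sum>i<k. d i)"
    by (rule sum_strict_mono) (use kne dbound in \<open>auto simp: abs_less_iff\<close>)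
  ultimately show ?thesis using diff unfolding l_def by simp
qed

end
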